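(* Let $n\ge1$. For all $w_1,w_2\in\mathrm{BB}_n$ and $\gamma\in\Gamma_{n+1}=\{1,e_n,X_n,Y_{n+1}\}$ one has $\epsilon_n(w_1\gamma w_2)=\mathrm{tr}(\gamma)\,w_1w_2$ and $\mathrm{tr}(w_1\gamma w_2)=\mathrm{tr}(\gamma)\,\mathrm{tr}(w_1w_2)$.
   Context: $R$ is an integral domain with units $q,\lambda,x,q_0$ and elements $A,q_1$; $\delta=q-q^{-1}$; standing assumptions $x\delta=\delta-\lambda+\lambda^{-1}$, $q_0=q^{-1}$, $A(1-q_0\lambda)=q_1x$. $\mathrm{BB}_n$ is the unital associative $R$-algebra generated by invertible $Y,X_1,\dots,X_{n-1}$ and elements $e_1,\dots,e_{n-1}$ with relations: $X_iX_j=X_jX_i$, $e_ie_j=e_je_i$ for $|i-j|>1$; $X_iX_jX_i=X_jX_iX_j$ for $|i-j|=1$; $X_ie_i=e_iX_i=\lambda e_i$; $e_i^2=xe_i$; $X_i^{-1}=X_i-\delta+\delta e_i$; $X_i^2=1+\delta X_i-\delta\lambda e_i$; for $|i-j|=1$ (signs consistent): $e_iX_j^{\pm1}e_i=\lambda^{\mp1}e_i$, $e_ie_je_i=e_i$, $e_iX_j^{\pm1}X_i^{\pm1}=X_j^{\pm1}X_i^{\pm1}e_j$, $X_i^{\pm1}e_je_i=X_j^{\mp1}e_i$, $e_ie_jX_i^{\pm1}=e_iX_j^{\mp1}$, $e_iX_j^{\pm1}X_i^{\pm1}=e_ie_j$, $X_i^{\pm1}X_j^{\pm1}e_i=e_je_i$,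 $X_ie_jX_i^{-1}=X_j^{-1}e_iX_j$, $X_ie_jX_i=X_j^{-1}e_iX_j^{-1}$; and $X_1YX_1Y=YX_1YX_1$, $Y^2=q_1Y+q_0$, $YX_1Ye_1=e_1$, $YX_i=X_iY$ ($i>1$), $e_1Ye_1=Ae_1$; it is assumed that $e_1\in\mathrm{BB}_2$ is nonzero with $re_1=0\Rightarrow r=0$, and $e_1,Ye_1$ linearly independent. $\mathrm{BB}_0=R$; $\mathrm{BB}_m\subset\mathrm{BB}_n$ ($m\le n$) as the subalgebra generated by $Y,X_i,e_i$ with $i\le m-1$. $Y_{n+1}:=X_nX_{n-1}\cdots X_1YX_1^{-1}\cdots X_n^{-1}$. Hypothesis (assumed): for every $n$ the map $\mathrm{BB}_n\to\mathrm{BB}_{n+2}$, $a\mapsto x^{-1}ae_{n+1}$, is injective. Conditional expectation: for $a\in\mathrm{BB}_{n+1}$, $\epsilon_n(a)\in\mathrm{BB}_n$ is the element with $e_{n+1}ae_{n+1}=x\,\epsilon_n(a)e_{n+1}$ in $\mathrm{BB}_{n+2}$. Trace: $\mathrm{tr}(r)=r$ on $\mathrm{BB}_0=R$ and $\mathrm{tr}(a)=\mathrm{tr}(\epsilon_{n-1}(a))$ for $a\in\mathrm{BB}_n$. *)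

theory Defs
  imports Main
begin

text \<open>
  The algebras BB_0 \<subseteq> BB_1 \<subseteq> ... are modelled inside one ambient ring 'a
  (their union), which is an R-algebra via a ring homomorphism sc : R \<rightarrow> 'a
  with central image. Units of R are given together with their inverses:
  qi = q^-1 (= q_0), lami = lambda^-1, xi = x^-1.
  Generators: Y, X i, e i (i \<ge> 1).
\<close>

definition delta :: "'r::idom \<Rightarrow> 'r \<Rightarrow> 'r" where
  "delta q qi = q - qi"

definition Xinv :: "('r::idom \<Rightarrow> 'a::ring_1) \<Rightarrow> 'r \<Rightarrow> 'r \<Rightarrow> (nat \<Rightarrow> 'a) \<Rightarrow> (nat \<Rightarrow> 'a) \<Rightarrow> nat \<Rightarrow> 'a" where
  "Xinv sc q qi X e i = X i - sc (delta q qi) + sc (delta q qi) * e i"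

text \<open>Yn ... k = Y_{k+1} = X_k ... X_1 Y X_1^{-1} ... X_k^{-1}\<close>
fun Yn :: "('r::idom \<Rightarrow> 'a::ring_1) \<Rightarrow> 'r \<Rightarrow> 'r \<Rightarrow> 'a \<Rightarrow> (nat \<Rightarrow> 'a) \<Rightarrow> (nat \<Rightarrow> 'a) \<Rightarrow> nat \<Rightarrow> 'a" where
  "Yn sc q qi Y X e 0 = Y"
| "Yn sc q qi Y X e (Suc k) = X (Suc k) * Yn sc q qi Y X e k * Xinv sc q qi X e (Suc k)"

text \<open>BB_n as the subalgebra generated by R, Y (if n \<ge> 1), X_i, e_i (1 \<le> i \<le> n-1).
  (Inverses of Y and X_i are polynomials in the generators.) BB_0 = R.\<close>
inductive_set BBset :: "('r::idom \<Rightarrow> 'a::ring_1) \<Rightarrow> 'a \<Rightarrow> (nat \<Rightarrow> 'a) \<Rightarrow> (nat \<Rightarrow> 'a) \<Rightarrow> nat \<Rightarrow> 'a set"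
  for sc Y X e n where
  scal: "sc r \<in> BBset sc Y X e n"
| genY: "1 \<le> n \<Longrightarrow> Y \<in> BBset sc Y X e n"
| genX: "1 \<le> i \<Longrightarrow> i < n \<Longrightarrow> X i \<in> BBset sc Y X e n"
| gene: "1 \<le> i \<Longrightarrow> i < n \<Longrightarrow> e i \<in> BBset sc Y X e n"
| add: "a \<in> BBset sc Y X e n \<Longrightarrow> b \<in> BBset sc Y X e n \<Longrightarrow> a + b \<in> BBset sc Y X e n"
| mult: "a \<in> BBset sc Y X e n \<Longrightarrow> b \<in> BBset sc Y X e n \<Longrightarrow> a * b \<in> BBset sc Y X e n"

definition BB_axioms ::
  "('r::idom \<Rightarrow> 'a::ring_1) \<Rightarrow> 'r \<Rightarrow> 'r \<Rightarrow> 'r \<Rightarrow> 'r \<Rightarrow> 'r \<Rightarrow> 'r \<Rightarrow> 'r \<Rightarrow> 'r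
    \<Rightarrow> 'a \<Rightarrow> (nat \<Rightarrow> 'a) \<Rightarrow> (nat \<Rightarrow> 'a) \<Rightarrow> bool" where
  "BB_axioms sc q qi lam lami x xi A q1 Y X e \<longleftrightarrow>
    \<comment> \<open>R-algebra structure\<close>
    sc 0 = 0 \<and> sc 1 = 1 \<and> (\<forall>r s. sc (r + s) = sc r + sc s) \<and> (\<forall>r s. sc (r * s) = sc r * sc s) \<and>
    (\<forall>r a. sc r * a = a * sc r) \<and>
    \<comment> \<open>units and standing assumptions on parameters (q_0 = qi)\<close>
    q * qi = 1 \<and> lam * lami = 1 \<and> x * xi = 1 \<and>
    x * delta q qi = delta q qi - lam + lami \<and>
    A * (1 - qi * lam) = q1 * x \<and>
    \<comment> \<open>invertibility of the generators\<close>
    (\<exists>Yi. Y * Yi = 1 \<and> Yi * Y = 1) \<and>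
    (\<forall>i\<ge>1. X i * Xinv sc q qi X e i = 1 \<and> Xinv sc q qi X e i * X i = 1) \<and>
    \<comment> \<open>relations involving one index\<close>
    (\<forall>i\<ge>1. X i * e i = sc lam * e i \<and> e i * X i = sc lam * e i \<and>
            e i * e i = sc x * e i \<and>
            X i * X i = 1 + sc (delta q qi) * X i - sc (delta q qi * lam) * e i) \<and>
    \<comment> \<open>far commutation, |i - j| > 1\<close>
    (\<forall>i\<ge>1. \<forall>j\<ge>1. (i + 1 < j \<or> j + 1 < i) \<longrightarrow>
        X i * X j = X j * X i \<and> e i * e j = e j * e i \<and> X i * e j = e j * X i) \<and>
    \<comment> \<open>adjacent relations, |i - j| = 1\<close>
    (\<forall>i\<ge>1. \<forall>j\<ge>1. (i = j + 1 \<or> j = i + 1) \<longrightarrow>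
        (let Xi = Xinv sc q qi X e in
        X i * X j * X i = X j * X i * X j \<and>
        e i * X j * e i = sc lami * e i \<and> e i * Xi j * e i = sc lam * e i \<and>
        e i * e j * e i = e i \<and>
        e i * X j * X i = X j * X i * e j \<and> e i * Xi j * Xi i = Xi j * Xi i * e j \<and>
        X i * e j * e i = Xi j * e i \<and> Xi i * e j * e i = X j * e i \<and>
        e i * e j * X i = e i * Xi j \<and> e i * e j * Xi i = e i * X j \<and>
        e i * X j * X i = e i * e j \<and> e i * Xi j * Xi i = e i * e j \<and>
        X i * X j * e i = e j * e i \<and> Xi i * Xi j * e i = e j * e i \<and>
        X i * e j * Xi i = Xi j * e i * X j \<and>
        X i * e j * X i = Xi j * e i * Xi j)) \<and>
    \<comment> \<open>relations involving Y\<close>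
    X 1 * Y * X 1 * Y = Y * X 1 * Y * X 1 \<and>
    Y * Y = sc q1 * Y + sc qi \<and>
    Y * X 1 * Y * e 1 = e 1 \<and>
    (\<forall>i>1. Y * X i = X i * Y \<and> Y * e i = e i * Y) \<and>
    e 1 * Y * e 1 = sc A * e 1 \<and>
    \<comment> \<open>nondegeneracy assumptions\<close>
    e 1 \<noteq> 0 \<and> (\<forall>r. sc r * e 1 = 0 \<longrightarrow> r = 0) \<and>
    (\<forall>r s. sc r * e 1 + sc s * (Y * e 1) = 0 \<longrightarrow> r = 0 \<and> s = 0) \<and>
    \<comment> \<open>hypothesis: a \<mapsto> x^-1 a e_{n+1} is injective on BB_n, for every n\<close>
    (\<forall>n. \<forall>a\<in>BBset sc Y X e n. \<forall>b\<in>BBset sc Y X e n.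
        sc xi * a * e (n + 1) = sc xi * b * e (n + 1) \<longrightarrow> a = b)"

definition eps :: "('r::idom \<Rightarrow> 'a::ring_1) \<Rightarrow> 'r \<Rightarrow> 'a \<Rightarrow> (nat \<Rightarrow> 'a) \<Rightarrow> (nat \<Rightarrow> 'a) \<Rightarrow> nat \<Rightarrow> 'a \<Rightarrow> 'a" where
  "eps sc x Y X e n a =
     (THE b. b \<in> BBset sc Y X e n \<and> e (n + 1) * a * e (n + 1) = sc x * b * e (n + 1))"

text \<open>Trace of an element regarded in BB_n: tr(a) = tr(epsilon_{n-1}(a)), tr(r) = r on BB_0 = R
  (values in BB_0 = image of sc).\<close>
fun trn :: "('r::idom \<Rightarrow> 'a::ring_1) \<Rightarrow> 'r \<Rightarrow> 'a \<Rightarrow> (nat \<Rightarrow> 'a) \<Rightarrow> (nat \<Rightarrow> 'a) \<Rightarrow> nat \<Rightarrow> 'a \<Rightarrow> 'a" where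
  "trn sc x Y X e 0 a = a"
| "trn sc x Y X e (Suc n) a = trn sc x Y X e n (eps sc x Y X e n a)"

end

theory Submission imports Defs begin

locale BBloc =
  fixes sc :: "'r::idom \<Rightarrow> 'a::ring_1" and q qi lam lami x xi A q1 :: 'r
    and Y :: 'a and X e :: "nat \<Rightarrow> 'a"
  assumes ax: "BB_axioms sc q qi lam lami x xi A q1 Y X e"
begin

abbreviation "B \<equiv> BBset sc Y X e"
abbreviation "Xi \<equiv> Xinv sc q qi X e"
abbreviation "d \<equiv> sc (delta q qi)"

lemmas ax1 = ax[unfolded BB_axioms_def, THEN conjunct1]
lemmas ax2 = ax[unfolded BB_axioms_def, THEN conjunct2, THEN conjunct1]
lemmas ax3 = ax[unfolded BB_axioms_def, THEN conjunct2, THEN conjunct2, THEN conjunct1]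
lemmas ax4 = ax[unfolded BB_axioms_def, THEN conjunct2, THEN conjunct2, THEN conjunct2, THEN conjunct1]
lemmas ax5 = ax[unfolded BB_axioms_def, THEN conjunct2, THEN conjunct2, THEN conjunct2, THEN conjunct2, THEN conjunct1]
lemmas ax6 = ax[unfolded BB_axioms_def, THEN conjunct2, THEN conjunct2, THEN conjunct2, THEN conjunct2, THEN conjunct2, THEN conjunct1]
lemmas ax7 = ax[unfolded BB_axioms_def, THEN conjunct2, THEN conjunct2, THEN conjunct2, THEN conjunct2, THEN conjunct2, THEN conjunct2, THEN conjunct1]
lemmas ax8 = ax[unfolded BB_axioms_def, THEN conjunct2, THEN conjunct2, THEN conjunct2, THEN conjunct2, THEN conjunct2, THEN conjunct2, THEN conjunct2, THEN conjunct1]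
lemmas ax9 = ax[unfolded BB_axioms_def, THEN conjunct2, THEN conjunct2, THEN conjunct2, THEN conjunct2, THEN conjunct2, THEN conjunct2, THEN conjunct2, THEN conjunct2, THEN conjunct1]
lemmas ax12 = ax[unfolded BB_axioms_def, THEN conjunct2, THEN conjunct2, THEN conjunct2, THEN conjunct2, THEN conjunct2, THEN conjunct2, THEN conjunct2, THEN conjunct2, THEN conjunct2, THEN conjunct2, THEN conjunct2, THEN conjunct1]
lemmas ax13 = ax[unfolded BB_axioms_def, THEN conjunct2, THEN conjunct2, THEN conjunct2, THEN conjunct2, THEN conjunct2, THEN conjunct2, THEN conjunct2, THEN conjunct2, THEN conjunct2, THEN conjunct2, THEN conjunct2, THEN conjunct2, THEN conjunct1]
lemmas ax14 = ax[unfolded BB_axioms_def, THEN conjunct2, THEN conjunct2, THEN conjunct2, THEN conjunct2, THEN conjunct2, THEN conjunct2, THEN conjunct2, THEN conjunct2, THEN conjunct2, THEN conjunct2, THEN conjunct2, THEN conjunct2, THEN conjunct2, THEN conjunct1]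
lemmas ax15 = ax[unfolded BB_axioms_def, THEN conjunct2, THEN conjunct2, THEN conjunct2, THEN conjunct2, THEN conjunct2, THEN conjunct2, THEN conjunct2, THEN conjunct2, THEN conjunct2, THEN conjunct2, THEN conjunct2, THEN conjunct2, THEN conjunct2, THEN conjunct2, THEN conjunct1]
lemmas ax16 = ax[unfolded BB_axioms_def, THEN conjunct2, THEN conjunct2, THEN conjunct2, THEN conjunct2, THEN conjunct2, THEN conjunct2, THEN conjunct2, THEN conjunct2, THEN conjunct2, THEN conjunct2, THEN conjunct2, THEN conjunct2, THEN conjunct2, THEN conjunct2, THEN conjunct2, THEN conjunct1]
lemmas ax17 = ax[unfolded BB_axioms_def, THEN conjunct2, THEN conjunct2, THEN conjunct2, THEN conjunct2, THEN conjunct2, THEN conjunct2, THEN conjunct2, THEN conjunct2, THEN conjunct2, THEN conjunct2, THEN conjunct2, THEN conjunct2, THEN conjunct2, THEN conjunct2, THEN conjunct2, THEN conjunct2, THEN conjunct1]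
lemmas ax18 = ax[unfolded BB_axioms_def, THEN conjunct2, THEN conjunct2, THEN conjunct2, THEN conjunct2, THEN conjunct2, THEN conjunct2, THEN conjunct2, THEN conjunct2, THEN conjunct2, THEN conjunct2, THEN conjunct2, THEN conjunct2, THEN conjunct2, THEN conjunct2, THEN conjunct2, THEN conjunct2, THEN conjunct2, THEN conjunct1]
lemmas ax19 = ax[unfolded BB_axioms_def, THEN conjunct2, THEN conjunct2, THEN conjunct2, THEN conjunct2, THEN conjunct2, THEN conjunct2, THEN conjunct2, THEN conjunct2, THEN conjunct2, THEN conjunct2, THEN conjunct2, THEN conjunct2, THEN conjunct2, THEN conjunct2, THEN conjunct2, THEN conjunct2, THEN conjunct2, THEN conjunct2, THEN conjunct1]
lemmas ax20 = ax[unfolded BB_axioms_def, THEN conjunct2, THEN conjunct2, THEN conjunct2, THEN conjunct2, THEN conjunct2, THEN conjunct2, THEN conjunct2, THEN conjunct2, THEN conjunct2, THEN conjunct2, THEN conjunct2, THEN conjunct2, THEN conjunct2, THEN conjunct2, THEN conjunct2, THEN conjunct2, THEN conjunct2, THEN conjunct2, THEN conjunct2, THEN conjunct1]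
lemmas ax24 = ax[unfolded BB_axioms_def, THEN conjunct2, THEN conjunct2, THEN conjunct2, THEN conjunct2, THEN conjunct2, THEN conjunct2, THEN conjunct2, THEN conjunct2, THEN conjunct2, THEN conjunct2, THEN conjunct2, THEN conjunct2, THEN conjunct2, THEN conjunct2, THEN conjunct2, THEN conjunct2, THEN conjunct2, THEN conjunct2, THEN conjunct2, THEN conjunct2, THEN conjunct2, THEN conjunct2, THEN conjunct2]

lemma sc0: "sc 0 = 0" by (rule ax1)
lemma sc1: "sc 1 = 1" by (rule ax2)
lemma sc_add: "sc (r + s) = sc r + sc s" using ax3 by blast
lemma sc_mult: "sc (r * s) = sc r * sc s" using ax4 by blast
lemma sc_comm: "sc r * a = a * sc r" using ax5 by blast
lemma qqi: "q * qi = 1" by (rule ax6)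
lemma lamlami: "lam * lami = 1" by (rule ax7)
lemma xxi: "x * xi = 1" by (rule ax8)
lemma xdelta: "x * delta q qi = delta q qi - lam + lami" by (rule ax9)
lemma XXi: "1 \<le> i \<Longrightarrow> X i * Xi i = 1" using ax12 by blast
lemma XiX: "1 \<le> i \<Longrightarrow> Xi i * X i = 1" using ax12 by blast
lemma Xe: "1 \<le> i \<Longrightarrow> X i * e i = sc lam * e i" using ax13 by blast
lemma eX: "1 \<le> i \<Longrightarrow> e i * X i = sc lam * e i" using ax13 by blast
lemma ee: "1 \<le> i \<Longrightarrow> e i * e i = sc x * e i" using ax13 by blast
lemma XX: "1 \<le> i \<Longrightarrow> X i * X i = 1 + d * X i - sc (delta q qi * lam) * e i" using ax13 by blast

lemma far: "1 \<le> i \<Longrightarrow> 1 \<le> j \<Longrightarrow> i + 1 < j \<or> j + 1 < i \<Longrightarrow>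
   X i * X j = X j * X i \<and> e i * e j = e j * e i \<and> X i * e j = e j * X i"
  using ax14 by blast

definition adj :: "nat \<Rightarrow> nat \<Rightarrow> bool" where
  "adj i j \<longleftrightarrow> 1 \<le> i \<and> 1 \<le> j \<and> (i = j + 1 \<or> j = i + 1)"

lemma adjall: "adj i j \<Longrightarrow> (let Xi = Xinv sc q qi X e in
        X i * X j * X i = X j * X i * X j \<and>
        e i * X j * e i = sc lami * e i \<and> e i * Xi j * e i = sc lam * e i \<and>
        e i * e j * e i = e i \<and>
        e i * X j * X i = X j * X i * e j \<and> e i * Xi j * Xi i = Xi j * Xi i * e j \<and>
        X i * e j * e i = Xi j * e i \<and> Xi i * e j * e i = X j * e i \<and>
        e i * e j * X i = e i * Xi j \<and> e i * e j * Xi i = e i * X j \<and>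
        e i * X j * X i = e i * e j \<and> e i * Xi j * Xi i = e i * e j \<and>
        X i * X j * e i = e j * e i \<and> Xi i * Xi j * e i = e j * e i \<and>
        X i * e j * Xi i = Xi j * e i * X j \<and>
        X i * e j * X i = Xi j * e i * Xi j)"
  using ax15 unfolding adj_def by blast

lemmas adjrels = adjall[unfolded Let_def, THEN conjunct1]
  adjall[unfolded Let_def, THEN conjunct2, THEN conjunct1]

lemma Yrels: "X 1 * Y * X 1 * Y = Y * X 1 * Y * X 1"
  "Y * Y = sc q1 * Y + sc qi" "Y * X 1 * Y * e 1 = e 1"
  "e 1 * Y * e 1 = sc A * e 1"
  by (rule ax16 ax17 ax18 ax20)+

lemma YX: "1 < i \<Longrightarrow> Y * X i = X i * Y" using ax19 by blast
lemma Ye: "1 < i \<Longrightarrow> Y * e i = e i * Y" using ax19 by blast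

lemma inj: "a \<in> B n \<Longrightarrow> b \<in> B n \<Longrightarrow> sc xi * a * e (n + 1) = sc xi * b * e (n + 1) \<Longrightarrow> a = b"
  using ax unfolding BB_axioms_def by blast

lemma a_braid: "adj i j \<Longrightarrow> X i * X j * X i = X j * X i * X j"
  using adjall[of i j] unfolding Let_def by blast

lemma a_eXe: "adj i j \<Longrightarrow> e i * X j * e i = sc lami * e i"
  using adjall[of i j] unfolding Let_def by blast

lemma a_eXie: "adj i j \<Longrightarrow> e i * Xi j * e i = sc lam * e i"
  using adjall[of i j] unfolding Let_def by blast

lemma a_eee: "adj i j \<Longrightarrow> e i * e j * e i = e i"
  using adjall[of i j] unfolding Let_def by blast

lemma a_eXXc: "adj i j \<Longrightarrow> e i * X j * X i = X j * X i * e j"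
  using adjall[of i j] unfolding Let_def by blast

lemma a_eXiXic: "adj i j \<Longrightarrow> e i * Xi j * Xi i = Xi j * Xi i * e j"
  using adjall[of i j] unfolding Let_def by blast

lemma a_Xee: "adj i j \<Longrightarrow> X i * e j * e i = Xi j * e i"
  using adjall[of i j] unfolding Let_def by blast

lemma a_Xiee: "adj i j \<Longrightarrow> Xi i * e j * e i = X j * e i"
  using adjall[of i j] unfolding Let_def by blast

lemma a_eeX: "adj i j \<Longrightarrow> e i * e j * X i = e i * Xi j"
  using adjall[of i j] unfolding Let_def by blast

lemma a_eeXi: "adj i j \<Longrightarrow> e i * e j * Xi i = e i * X j"
  using adjall[of i j] unfolding Let_def by blast

lemma a_eXX: "adj i j \<Longrightarrow> e i * X j * X i = e i * e j"
  using adjall[of i j] unfolding Let_def by blast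

lemma a_eXiXi: "adj i j \<Longrightarrow> e i * Xi j * Xi i = e i * e j"
  using adjall[of i j] unfolding Let_def by blast

lemma a_XXe: "adj i j \<Longrightarrow> X i * X j * e i = e j * e i"
  using adjall[of i j] unfolding Let_def by blast

lemma a_XiXie: "adj i j \<Longrightarrow> Xi i * Xi j * e i = e j * e i"
  using adjall[of i j] unfolding Let_def by blast

lemma a_XeXi: "adj i j \<Longrightarrow> X i * e j * Xi i = Xi j * e i * X j"
  using adjall[of i j] unfolding Let_def by blast

lemma a_XeX: "adj i j \<Longrightarrow> X i * e j * X i = Xi j * e i * Xi j"
  using adjall[of i j] unfolding Let_def by blast


lemma adj_Suc1: "1 \<le> k \<Longrightarrow> adj (Suc k) k" and adj_Suc2: "1 \<le> k \<Longrightarrow> adj k (Suc k)"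
  unfolding adj_def by auto

lemma sc_minus: "sc (- r) = - sc r"
proof -
  have "sc (r + - r) = sc r + sc (- r)" by (rule sc_add)
  hence "sc r + sc (- r) = 0" using sc0 by simp
  thus ?thesis by (rule minus_unique[symmetric])
qed

lemma sc_diff: "sc (r - s) = sc r - sc s"
  using sc_add[of r "-s"] sc_minus[of s] by simp

lemma Xi_def': "Xi i = X i - d + d * e i"
  unfolding Xinv_def by simp

lemma B_sc: "sc r \<in> B n" by (rule BBset.scal)
lemma B_one: "1 \<in> B n" using B_sc[of 1] sc1 by simp
lemma B_zero: "0 \<in> B n" using B_sc[of 0] sc0 by simp
lemma B_add: "a \<in> B n \<Longrightarrow> b \<in> B n \<Longrightarrow> a + b \<in> B n" by (rule BBset.add)
lemma B_mult: "a \<in> B n \<Longrightarrow> b \<in> B n \<Longrightarrow> a * b \<in> B n" by (rule BBset.mult)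
lemma B_uminus: "a \<in> B n \<Longrightarrow> - a \<in> B n"
  using B_mult[OF B_sc[of "-1"], of a] sc_minus[of 1] sc1 by simp
lemma B_diff: "a \<in> B n \<Longrightarrow> b \<in> B n \<Longrightarrow> a - b \<in> B n"
  using B_add[of a n "-b"] B_uminus by simp
lemma B_Y: "1 \<le> n \<Longrightarrow> Y \<in> B n" by (rule BBset.genY)
lemma B_X: "1 \<le> i \<Longrightarrow> i < n \<Longrightarrow> X i \<in> B n" by (rule BBset.genX)
lemma B_e: "1 \<le> i \<Longrightarrow> i < n \<Longrightarrow> e i \<in> B n" by (rule BBset.gene)
lemma B_Xi: "1 \<le> i \<Longrightarrow> i < n \<Longrightarrow> Xi i \<in> B n"
  unfolding Xi_def' by (intro B_add B_diff B_mult B_X B_e B_sc)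

lemma B_mono: "a \<in> B m \<Longrightarrow> m \<le> n \<Longrightarrow> a \<in> B n"
  by (induction rule: BBset.induct) (auto intro: BBset.intros)


lemma B_comm:
  assumes "c \<in> B n" "\<And>r. sc r * z = z * sc r" "1 \<le> n \<Longrightarrow> Y * z = z * Y"
    "\<And>i. 1 \<le> i \<Longrightarrow> i < n \<Longrightarrow> X i * z = z * X i"
    "\<And>i. 1 \<le> i \<Longrightarrow> i < n \<Longrightarrow> e i * z = z * e i"
  shows "c * z = z * c"
  using assms(1)
proof induction
  case (add a b) then show ?case by (simp add: distrib_left distrib_right)
next
  case (mult a b)
  have "a * b * z = a * (z * b)" using mult by (simp add: mult.assoc)
  also have "\<dots> = z * (a * b)" using mult by (simp add: mult.assoc[symmetric])
  finally show ?case .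
qed (use assms in auto)

lemma rz2: "(a::'a) * b = c \<Longrightarrow> a * (b * z) = c * z" by (simp add: mult.assoc[symmetric])
lemma rz3: "(a::'a) * b * c = r \<Longrightarrow> a * (b * (c * z)) = r * z" by (simp add: mult.assoc[symmetric])
lemma rz4: "(a::'a) * b * c * f = r \<Longrightarrow> a * (b * (c * (f * z))) = r * z" by (simp add: mult.assoc[symmetric])
lemma rn3: "(a::'a) * b * c = r \<Longrightarrow> a * (b * c) = r" by (simp add: mult.assoc[symmetric])
lemma rn4: "(a::'a) * b * c * f = r \<Longrightarrow> a * (b * (c * f)) = r" by (simp add: mult.assoc[symmetric])
lemma cz: "(a::'a) * b = b * a \<Longrightarrow> a * (b * z) = b * (a * z)" by (simp add: mult.assoc[symmetric])

lemma sc_mz: "sc r * (sc s * z) = sc (r * s) * z" by (simp add: sc_mult mult.assoc)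
lemma sc_z: "a * (sc r * z) = sc r * (a * z)" by (simp add: sc_comm mult.assoc[symmetric]) (simp add: mult.assoc sc_comm)
lemma sc_r: "a * sc r = sc r * a" by (simp add: sc_comm)

lemma e_comm: "a \<in> B k \<Longrightarrow> a * e (Suc k) = e (Suc k) * a"
  by (rule B_comm) (auto simp: Ye far intro: sc_comm)

lemma X_comm: "a \<in> B k \<Longrightarrow> a * X (Suc k) = X (Suc k) * a"
  by (rule B_comm) (auto simp: YX far intro: sc_comm)

lemma Xi_comm: "a \<in> B k \<Longrightarrow> a * Xi (Suc k) = Xi (Suc k) * a"
proof -
  assume a: "a \<in> B k"
  have "a * Xi (Suc k) = a * X (Suc k) - a * d + (a * d) * e (Suc k)"
    unfolding Xi_def' by (simp add: algebra_simps)
  also have "\<dots> = X (Suc k) * a - d * a + d * (a * e (Suc k))"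
    using X_comm[OF a] sc_comm[of _ a] by (simp add: mult.assoc sc_z)
  also have "\<dots> = Xi (Suc k) * a"
    unfolding Xi_def' using e_comm[OF a] by (simp add: algebra_simps)
  finally show ?thesis .
qed

fun L :: "nat \<Rightarrow> 'a" where
  "L 0 = Y"
| "L (Suc k) = X (Suc k) * L k * X (Suc k)"

fun Linv :: "nat \<Rightarrow> 'a" where
  "Linv 0 = sc q * (Y - sc q1)"
| "Linv (Suc k) = Xi (Suc k) * Linv k * Xi (Suc k)"

lemma L_B: "L k \<in> B (Suc k)"
proof (induction k)
  case (Suc k)
  have "L k \<in> B (Suc (Suc k))" using B_mono[OF Suc] by simp
  then show ?case by (simp add: B_mult B_X)
qed (simp add: B_Y)

lemma Linv_B: "Linv k \<in> B (Suc k)"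
proof (induction k)
  case (Suc k)
  have "Linv k \<in> B (Suc (Suc k))" using B_mono[OF Suc] by simp
  then show ?case by (simp add: B_mult B_Xi)
qed (simp add: B_Y B_sc B_mult B_diff)

lemma L_Linv: "L k * Linv k = 1 \<and> Linv k * L k = 1"
proof (induction k)
  case 0
  have a: "Y * (Y - sc q1) = sc qi" "(Y - sc q1) * Y = sc qi"
    using Yrels(2) by (simp_all add: algebra_simps sc_comm[of q1 Y])
  have b: "sc q * sc qi = 1" using qqi sc1 by (simp add: sc_mult[symmetric])
  have "Y * (sc q * (Y - sc q1)) = 1" by (simp add: sc_z a b)
  moreover have "sc q * (Y - sc q1) * Y = 1" by (simp add: mult.assoc a b)
  ultimately show ?case by simp
next
  case (Suc k)
  have c1: "X (Suc k) * (Xi (Suc k) * z) = z" "Xi (Suc k) * (X (Suc k) * z) = z" for z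
    using rz2[OF XXi[of "Suc k"]] rz2[OF XiX[of "Suc k"]] by auto
  have c2: "L k * (Linv k * z) = z" "Linv k * (L k * z) = z" for z
    using Suc rz2[of "L k" "Linv k" 1] rz2[of "Linv k" "L k" 1] by auto
  have 1: "L (Suc k) * Linv (Suc k) = 1"
    using XXi[of "Suc k"] by (simp add: mult.assoc c1 c2)
  have 2: "Linv (Suc k) * L (Suc k) = 1"
    using XiX[of "Suc k"] by (simp add: mult.assoc c1 c2)
  from 1 2 show ?case by blast
qed


lemma L_comm_step:
  assumes IH: "\<And>a. a \<in> B m \<Longrightarrow> a * L m = L m * a" and c: "c \<in> B m"
  shows "c * L (Suc m) = L (Suc m) * c"
proof -
  have "c * L (Suc m) = X (Suc m) * (c * (L m * X (Suc m)))"
    using X_comm[OF c] by (simp add: mult.assoc[symmetric])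
  also have "\<dots> = X (Suc m) * (L m * (c * X (Suc m)))"
    using IH[OF c] by (simp add: mult.assoc[symmetric])
  also have "\<dots> = L (Suc m) * c"
    using X_comm[OF c] by (simp add: mult.assoc)
  finally show ?thesis .
qed

lemma L_comm: "a \<in> B k \<Longrightarrow> a * L k = L k * a"
proof (induction k arbitrary: a)
  case 0
  then show ?case by (rule B_comm) (auto intro: sc_comm)
next
  case (Suc m)
  have step: "c * L (Suc m) = L (Suc m) * c" if "c \<in> B m" for c
    by (rule L_comm_step) (auto intro: Suc.IH that)
  show ?case
  proof (rule B_comm[OF Suc.prems])
    show "sc r * L (Suc m) = L (Suc m) * sc r" for r by (rule sc_comm)
    show "Y * L (Suc m) = L (Suc m) * Y"
    proof (cases m)
      case 0
      then show ?thesis using Yrels(1) by (simp add: mult.assoc)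
    next
      case (Suc p)
      then show ?thesis using step[OF B_Y[of m]] by simp
    qed
    show "X i * L (Suc m) = L (Suc m) * X i" if "1 \<le> i" "i < Suc m" for i
    proof (cases "i < m")
      case True
      show ?thesis using step[OF B_X[OF that(1) True]] by simp
    next
      case False
      have im: "i = m" "1 \<le> m" using False that by auto
      then obtain p where m: "m = Suc p" by (cases m) auto
      have i: "i = Suc p" using im m by simp
      define j where "j = Suc p"
      define i2 where "i2 = Suc (Suc p)"
      have aj: "adj j i2" "adj i2 j" unfolding adj_def j_def i2_def by auto
      have br1: "X j * (X i2 * (X j * z)) = X i2 * (X j * (X i2 * z))" for z
        using rz3[OF a_braid[OF aj(1)]] by (simp add: mult.assoc)
      have c: "L p * (X i2 * z) = X i2 * (L p * z)" for z
        using cz[OF X_comm[OF L_B[of p]]] unfolding i2_def by simp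
      have br2: "X i2 * (X j * X i2) = X j * (X i2 * X j)"
        using rn3[OF a_braid[OF aj(2)]] by (simp add: mult.assoc)
      have Lm: "L (Suc m) = X i2 * (X j * (L p * (X j * X i2)))"
        unfolding m i2_def j_def by (simp add: mult.assoc)
      have "X j * L (Suc m) = X j * (X i2 * (X j * (L p * (X j * X i2))))" by (simp only: Lm)
      also have "\<dots> = X i2 * (X j * (X i2 * (L p * (X j * X i2))))" by (simp only: br1)
      also have "\<dots> = X i2 * (X j * (L p * (X i2 * (X j * X i2))))" by (simp only: c)
      also have "\<dots> = X i2 * (X j * (L p * (X j * (X i2 * X j))))" by (simp only: br2)
      also have "\<dots> = L (Suc m) * X j" by (simp only: Lm mult.assoc)
      finally show ?thesis unfolding i j_def .
    qed
    show "e i * L (Suc m) = L (Suc m) * e i" if "1 \<le> i" "i < Suc m" for i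
    proof (cases "i < m")
      case True
      show ?thesis using step[OF B_e[OF that(1) True]] by simp
    next
      case False
      have im: "i = m" "1 \<le> m" using False that by auto
      then obtain p where m: "m = Suc p" by (cases m) auto
      have i: "i = Suc p" using im m by simp
      define j where "j = Suc p"
      define i2 where "i2 = Suc (Suc p)"
      have aj: "adj j i2" "adj i2 j" unfolding adj_def j_def i2_def by auto
      have r1: "e j * (X i2 * (X j * z)) = X i2 * (X j * (e i2 * z))" for z
        using rz3[OF a_eXXc[OF aj(1)]] by (simp add: mult.assoc)
      have c: "e i2 * (L p * z) = L p * (e i2 * z)" for z
        using cz[OF e_comm[OF L_B[of p]]] unfolding i2_def by simp
      have r2: "e i2 * (X j * X i2) = X j * (X i2 * e j)"
        using rn3[OF a_eXXc[OF aj(2)]] by (simp add: mult.assoc)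
      have Lm: "L (Suc m) = X i2 * (X j * (L p * (X j * X i2)))"
        unfolding m i2_def j_def by (simp add: mult.assoc)
      have "e j * L (Suc m) = e j * (X i2 * (X j * (L p * (X j * X i2))))" by (simp only: Lm)
      also have "\<dots> = X i2 * (X j * (e i2 * (L p * (X j * X i2))))" by (simp only: r1)
      also have "\<dots> = X i2 * (X j * (L p * (e i2 * (X j * X i2))))" by (simp only: c)
      also have "\<dots> = X i2 * (X j * (L p * (X j * (X i2 * e j))))" by (simp only: r2)
      also have "\<dots> = L (Suc m) * e j" by (simp only: Lm mult.assoc)
      finally show ?thesis unfolding i j_def .
    qed
  qed
qed

lemma ZE: "L k * (X (Suc k) * (L k * e (Suc k))) = e (Suc k)"
proof (induction k)
  case 0
  then show ?case using Yrels(3) by (simp add: mult.assoc)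
next
  case (Suc k)
  define j where "j = Suc k"
  define i where "i = Suc (Suc k)"
  have aj: "adj j i" "adj i j" unfolding adj_def j_def i_def by auto
  have IH: "L k * (X j * (L k * (e j * z))) = e j * z" for z
    using rz2[OF Suc.IH] unfolding j_def by (simp add: mult.assoc)
  have br: "X j * (X i * (X j * z)) = X i * (X j * (X i * z))" for z
    using rz3[OF a_braid[OF aj(1)]] by (simp add: mult.assoc)
  have c: "L k * (X i * z) = X i * (L k * z)" for z
    using cz[OF X_comm[OF L_B[of k]]] unfolding i_def by simp
  have r1: "X i * (X j * e i) = e j * e i"
    using rn3[OF a_XXe[OF aj(2)]] .
  have r2: "X j * (X i * (e j * e i)) = X j * (Xi j * e i)"
    using rn3[OF a_Xee[OF aj(2)]] by simp
  have r3: "X j * (Xi j * e i) = e i"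
    using rz2[OF XXi[of j]] unfolding j_def by simp
  have "L (Suc k) * (X (Suc (Suc k)) * (L (Suc k) * e (Suc (Suc k))))
      = X j * (L k * (X j * (X i * (X j * (L k * (X j * e i))))))"
    unfolding i_def j_def by (simp add: mult.assoc)
  also have "\<dots> = X j * (L k * (X i * (X j * (X i * (L k * (X j * e i))))))" by (simp only: br)
  also have "\<dots> = X j * (X i * (L k * (X j * (L k * (X i * (X j * e i))))))" by (simp only: c)
  also have "\<dots> = X j * (X i * (L k * (X j * (L k * (e j * e i)))))" by (simp only: r1)
  also have "\<dots> = X j * (X i * (e j * e i))" by (simp only: IH)
  also have "\<dots> = e i" by (simp only: r2 r3)
  finally show ?case unfolding i_def .
qed

lemma XLe: "X (Suc k) * (L k * e (Suc k)) = Linv k * e (Suc k)"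
proof -
  have "Linv k * (L k * (X (Suc k) * (L k * e (Suc k)))) = Linv k * e (Suc k)" by (simp add: ZE)
  then show ?thesis using L_Linv[of k] by (simp add: mult.assoc[symmetric])
qed

abbreviation "Yk \<equiv> Yn sc q qi Y X e"

lemma Yn_B: "Yk k \<in> B (Suc k)"
proof (induction k)
  case (Suc k)
  have "Yk k \<in> B (Suc (Suc k))" using B_mono[OF Suc] by simp
  then show ?case by (simp add: B_mult B_X B_Xi)
qed (simp add: B_Y)

lemma eYe: "e (Suc k) * (Yk k * e (Suc k)) = sc A * e (Suc k)"
proof (induction k)
  case 0
  then show ?case using Yrels(4) by (simp add: mult.assoc)
next
  case (Suc k)
  define j where "j = Suc k"
  define i where "i = Suc (Suc k)"
  have aj: "adj j i" "adj i j" unfolding adj_def j_def i_def by auto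
  have IH: "e j * (Yk k * (e j * z)) = sc A * (e j * z)" for z
    using rz2[OF Suc.IH] unfolding j_def by (simp add: mult.assoc)
  have r1: "e i * (X j * z) = e i * (e j * (Xi i * z))" for z
    using rz3[OF a_eeXi[OF aj(2)]] by (simp add: mult.assoc)
  have r2: "Xi j * e i = X i * (e j * e i)"
    using rn3[OF a_Xee[OF aj(2)]] by simp
  have c: "Xi i * (Yk k * z) = Yk k * (Xi i * z)" for z
    using cz[OF Xi_comm[OF Yn_B[of k]]] unfolding i_def by simp
  have r3: "Xi i * (X i * z) = z" for z
    using rz2[OF XiX[of i]] unfolding i_def by simp
  have r4: "e i * (e j * e i) = e i" using rn3[OF a_eee[OF aj(2)]] .
  have "e (Suc (Suc k)) * (Yk (Suc k) * e (Suc (Suc k)))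
      = e i * (X j * (Yk k * (Xi j * e i)))"
    unfolding i_def j_def by (simp add: mult.assoc)
  also have "\<dots> = e i * (e j * (Xi i * (Yk k * (X i * (e j * e i)))))" by (simp only: r1 r2)
  also have "\<dots> = e i * (e j * (Yk k * (e j * e i)))" by (simp only: c r3)
  also have "\<dots> = sc A * e i" by (simp only: IH sc_z r4)
  finally show ?case unfolding i_def .
qed


lemma eXi: "1 \<le> i \<Longrightarrow> e i * Xi i = sc lami * e i"
proof -
  assume i: "1 \<le> i"
  have "e i * Xi i = e i * X i - e i * d + e i * (d * e i)"
    unfolding Xi_def' by (simp add: algebra_simps)
  also have "\<dots> = sc lam * e i - d * e i + sc (delta q qi * x) * e i"
    using eX[OF i] ee[OF i] sc_comm[of "delta q qi" "e i", symmetric]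
    by (simp add: sc_z[of "e i"] sc_mz)
  also have "\<dots> = sc (lam - delta q qi + delta q qi * x) * e i"
    by (simp add: sc_add sc_diff algebra_simps)
  also have "lam - delta q qi + delta q qi * x = lami" using xdelta by (simp add: algebra_simps)
  finally show ?thesis .
qed

lemma Xie: "1 \<le> i \<Longrightarrow> Xi i * e i = sc lami * e i"
proof -
  assume i: "1 \<le> i"
  have "Xi i * e i = X i * e i - d * e i + d * (e i * e i)"
    unfolding Xi_def' by (simp add: algebra_simps)
  also have "\<dots> = sc lam * e i - d * e i + sc (delta q qi * x) * e i"
    using Xe[OF i] ee[OF i] by (simp add: sc_mult mult.assoc)
  also have "\<dots> = sc (lam - delta q qi + delta q qi * x) * e i"
    by (simp add: sc_add sc_diff algebra_simps)
  also have "lam - delta q qi + delta q qi * x = lami" using xdelta by (simp add: algebra_simps)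
  finally show ?thesis .
qed

lemma lamlami_sc: "sc lam * sc lami = 1" using lamlami sc1 by (simp add: sc_mult[symmetric])
lemma xxi_sc: "sc x * sc xi = 1" "sc xi * sc x = 1" using xxi sc1 by (simp_all add: sc_mult[symmetric] mult.commute)

lemma LIt_X_eL:
  assumes p: "p = Suc r"
  shows "X (Suc p) * (e p * (L p * e (Suc p))) = sc lam * (Xi p * (Linv r * e (Suc p)))"
proof -
  define k where "k = Suc p"
  have aj: "adj k p" "adj p k" unfolding adj_def k_def p by auto
  have p1: "1 \<le> p" using p by simp
  have r1: "e p * (X p * z) = sc lam * (e p * z)" for z using rz2[OF eX[OF p1]] by (simp add: mult.assoc)
  have r2: "X p * e k = Xi k * (e p * e k)" using rn3[OF a_Xiee[OF aj(1)]] by simp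
  have c1: "L r * (Xi k * z) = Xi k * (L r * z)" for z
    using cz[OF Xi_comm[OF L_B[of r]]] unfolding k_def p by simp
  have r3: "X k * (e p * (Xi k * z)) = Xi p * (e k * (X p * z))" for z
    using rz3[OF a_XeXi[OF aj(1)]] by (simp add: mult.assoc)
  have r4: "X p * (L r * (e p * z)) = Linv r * (e p * z)" for z
    using rz2[OF XLe[of r]] unfolding p by (simp add: mult.assoc)
  have c2: "e k * (Linv r * z) = Linv r * (e k * z)" for z
    using cz[OF e_comm[OF Linv_B[of r]], symmetric] unfolding k_def p by simp
  have r5: "e k * (e p * e k) = e k" using rn3[OF a_eee[OF aj(1)]] .
  have "X k * (e p * (L p * e k)) = X k * (e p * (X p * (L r * (X p * e k))))"
    unfolding p by (simp add: mult.assoc)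
  also have "\<dots> = sc lam * (X k * (e p * (L r * (Xi k * (e p * e k)))))"
    by (simp only: r1 r2 sc_z)
  also have "\<dots> = sc lam * (Xi p * (e k * (X p * (L r * (e p * e k)))))"
    by (simp only: c1 r3)
  also have "\<dots> = sc lam * (Xi p * (Linv r * e k))"
    by (simp only: r4 c2 r5)
  finally show ?thesis unfolding k_def .
qed

lemma LIt_e_eL:
  assumes p: "p = Suc r"
  shows "e (Suc p) * (e p * (L p * e (Suc p))) = sc lam * (Linv r * e (Suc p))"
proof -
  define k where "k = Suc p"
  have aj: "adj k p" "adj p k" unfolding adj_def k_def p by auto
  have p1: "1 \<le> p" using p by simp
  have r1: "e p * (X p * z) = sc lam * (e p * z)" for z using rz2[OF eX[OF p1]] by (simp add: mult.assoc)
  have r2: "X p * e k = Xi k * (e p * e k)" using rn3[OF a_Xiee[OF aj(1)]] by simp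
  have c1: "L r * (Xi k * z) = Xi k * (L r * z)" for z
    using cz[OF Xi_comm[OF L_B[of r]]] unfolding k_def p by simp
  have r3: "e k * (e p * (Xi k * z)) = e k * (X p * z)" for z
    using rz3[OF a_eeXi[OF aj(1)]] by (simp add: mult.assoc)
  have r4: "X p * (L r * (e p * z)) = Linv r * (e p * z)" for z
    using rz2[OF XLe[of r]] unfolding p by (simp add: mult.assoc)
  have c2: "e k * (Linv r * z) = Linv r * (e k * z)" for z
    using cz[OF e_comm[OF Linv_B[of r]], symmetric] unfolding k_def p by simp
  have r5: "e k * (e p * e k) = e k" using rn3[OF a_eee[OF aj(1)]] .
  have "e k * (e p * (L p * e k)) = e k * (e p * (X p * (L r * (X p * e k))))"
    unfolding p by (simp add: mult.assoc)
  also have "\<dots> = sc lam * (e k * (e p * (L r * (Xi k * (e p * e k)))))"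
    by (simp only: r1 r2 sc_z)
  also have "\<dots> = sc lam * (e k * (X p * (L r * (e p * e k))))"
    by (simp only: c1 r3)
  also have "\<dots> = sc lam * (Linv r * e k)"
    by (simp only: r4 c2 r5)
  finally show ?thesis unfolding k_def .
qed


declare L.simps(2)[simp del] Linv.simps(2)[simp del]

definition Gam :: "nat \<Rightarrow> 'a set" where
  "Gam k = (if k = 0 then {1, L 0} else {1, e k, X k, L k, e k * L k})"

lemma Gam_1: "1 \<in> Gam k" and Gam_L: "L k \<in> Gam k"
  unfolding Gam_def by auto
lemma Gam_e: "1 \<le> k \<Longrightarrow> e k \<in> Gam k" and Gam_X: "1 \<le> k \<Longrightarrow> X k \<in> Gam k"
  and Gam_eL: "1 \<le> k \<Longrightarrow> e k * L k \<in> Gam k"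
  unfolding Gam_def by auto

lemma Gam_cases: "g \<in> Gam k \<Longrightarrow> (g = 1 \<Longrightarrow> P) \<Longrightarrow> (g = L k \<Longrightarrow> P) \<Longrightarrow>
   (1 \<le> k \<Longrightarrow> g = e k \<Longrightarrow> P) \<Longrightarrow> (1 \<le> k \<Longrightarrow> g = X k \<Longrightarrow> P) \<Longrightarrow>
   (1 \<le> k \<Longrightarrow> g = e k * L k \<Longrightarrow> P) \<Longrightarrow> P"
  unfolding Gam_def by (cases "k = 0") auto

lemma Gam_B: "g \<in> Gam k \<Longrightarrow> g \<in> B (Suc k)"
proof (erule Gam_cases)
  assume "1 \<le> k" "g = e k * L k"
  then show ?thesis using B_mult[OF B_e[of k "Suc k"] L_B[of k]] by simp
qed (auto simp: B_one L_B B_e B_X)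

lemma Gam_comm: assumes "g \<in> Gam (Suc p)" "u \<in> B p" shows "u * g = g * u"
proof -
  have u1: "u \<in> B (Suc p)" using B_mono[OF assms(2)] by simp
  have eL: "u * (e (Suc p) * L (Suc p)) = e (Suc p) * L (Suc p) * u"
    using e_comm[OF assms(2)] L_comm[OF u1]
    by (metis mult.assoc)
  show ?thesis using assms(1)
    by (rule Gam_cases) (auto simp: e_comm[OF assms(2)] X_comm[OF assms(2)] L_comm[OF u1] eL)
qed

inductive_set Sp :: "nat \<Rightarrow> 'a set" for k where
  spg: "w \<in> B k \<Longrightarrow> g \<in> Gam k \<Longrightarrow> w' \<in> B k \<Longrightarrow> w * g * w' \<in> Sp k"
| spa: "a \<in> Sp k \<Longrightarrow> b \<in> Sp k \<Longrightarrow> a + b \<in> Sp k"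

lemma Sp_lmult: "s \<in> Sp k \<Longrightarrow> u \<in> B k \<Longrightarrow> u * s \<in> Sp k"
proof (induction rule: Sp.induct)
  case (spg w g w')
  then show ?case using Sp.spg[of "u * w" k g w'] B_mult by (simp add: mult.assoc)
next
  case (spa a b)
  then show ?case by (simp add: distrib_left Sp.spa)
qed

lemma Sp_rmult: "s \<in> Sp k \<Longrightarrow> u \<in> B k \<Longrightarrow> s * u \<in> Sp k"
proof (induction rule: Sp.induct)
  case (spg w g w')
  then show ?case using Sp.spg[of w k g "w' * u"] B_mult by (simp add: mult.assoc)
next
  case (spa a b)
  then show ?case by (simp add: distrib_right Sp.spa)
qed

lemma Sp_g: "g \<in> Gam k \<Longrightarrow> g \<in> Sp k"
  using Sp.spg[of 1 k g 1] B_one by simp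
lemma Sp_wg: "w \<in> B k \<Longrightarrow> g \<in> Gam k \<Longrightarrow> w * g \<in> Sp k"
  using Sp.spg[of w k g 1] B_one by simp
lemma Sp_gw: "g \<in> Gam k \<Longrightarrow> w \<in> B k \<Longrightarrow> g * w \<in> Sp k"
  using Sp.spg[of 1 k g w] B_one by simp
lemma B_Sp: "a \<in> B k \<Longrightarrow> a \<in> Sp k"
  using Sp_wg[OF _ Gam_1] by simp
lemma Sp_sc: "s \<in> Sp k \<Longrightarrow> sc r * s \<in> Sp k"
  using Sp_lmult B_sc by blast
lemma Sp_add: "a \<in> Sp k \<Longrightarrow> b \<in> Sp k \<Longrightarrow> a + b \<in> Sp k" by (rule Sp.spa)
lemma Sp_uminus: "s \<in> Sp k \<Longrightarrow> - s \<in> Sp k"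
proof -
  assume "s \<in> Sp k"
  then have "sc (-1) * s \<in> Sp k" by (rule Sp_sc)
  moreover have "sc (-1) * s = - s" using sc_minus[of 1] sc1 by simp
  ultimately show ?thesis by simp
qed
lemma Sp_diff: "a \<in> Sp k \<Longrightarrow> b \<in> Sp k \<Longrightarrow> a - b \<in> Sp k"
  unfolding diff_conv_add_uminus by (intro Sp_add Sp_uminus)

lemma Sp_B: "s \<in> Sp k \<Longrightarrow> s \<in> B (Suc k)"
proof (induction rule: Sp.induct)
  case (spg w g w')
  have "w \<in> B (Suc k)" "w' \<in> B (Suc k)" using B_mono spg by auto
  then show ?case using Gam_B[OF spg(2)] by (intro B_mult)
qed (rule B_add)

lemma XiL: "L p * X (Suc p) = Xi (Suc p) * L (Suc p)"
proof -
  have "Xi (Suc p) * L (Suc p) = (Xi (Suc p) * X (Suc p)) * (L p * X (Suc p))"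
    by (simp add: mult.assoc L.simps)
  then show ?thesis using XiX[of "Suc p"] by simp
qed

lemma XL_Sp: "X (Suc p) * L (Suc p) \<in> Sp (Suc p)"
proof -
  define k where "k = Suc p"
  have k1: "1 \<le> k" unfolding k_def by simp
  have ekL: "e k * (L p * X k) = sc lami * (e k * L k)"
  proof -
    have "e k * (L p * X k) = (e k * Xi k) * L k" using XiL[of p] unfolding k_def by (simp add: mult.assoc)
    also have "\<dots> = sc lami * (e k * L k)" using eXi[OF k1] by (simp add: mult.assoc)
    finally show ?thesis .
  qed
  have "X k * L k = (X k * X k) * (L p * X k)" unfolding k_def by (simp add: mult.assoc L.simps)
  also have "\<dots> = L p * X k + d * L k - sc (delta q qi * lam) * (e k * (L p * X k))"
    unfolding XX[OF k1] unfolding k_def by (simp add: distrib_right left_diff_distrib mult.assoc L.simps)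
  also have "\<dots> = L p * X k + d * L k - sc (delta q qi * lam) * (sc lami * (e k * L k))"
    by (simp only: ekL)
  finally have eq: "X k * L k = \<dots>" .
  have "L p * X k \<in> Sp k" using Sp_wg[OF _ Gam_X[OF k1]] B_mono[OF L_B[of p]] unfolding k_def by simp
  moreover have "L k \<in> Sp k" by (rule Sp_g[OF Gam_L])
  moreover have "e k * L k \<in> Sp k" by (rule Sp_g[OF Gam_eL[OF k1]])
  ultimately have "L p * X k + d * L k - sc (delta q qi * lam) * (sc lami * (e k * L k)) \<in> Sp k"
    by (intro Sp_diff Sp_add Sp_sc)
  then show ?thesis using eq unfolding k_def by simp
qed

lemma eL_Sp: "1 \<le> k \<Longrightarrow> e k * L k \<in> Sp k"
  by (rule Sp_g[OF Gam_eL])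


lemma LI_tab:
  assumes k: "k = Suc p" and g: "g = X k \<or> g = e k" and ga: "\<gamma> \<in> Gam p"
    and EXp: "\<And>a. a \<in> B (Suc p) \<Longrightarrow> \<exists>b\<in>B p. e (Suc p) * a * e (Suc p) = b * e (Suc p)"
  shows "\<exists>c\<in>B k. g * (\<gamma> * e k) = c * e k"
proof -
  have k1: "1 \<le> k" using k by simp
  show ?thesis using ga
  proof (rule Gam_cases)
    assume "\<gamma> = 1"
    then show ?thesis using g Xe[OF k1] ee[OF k1] B_sc by auto
  next
    assume ga: "\<gamma> = L p"
    show ?thesis using g
    proof
      assume "g = X k"
      then show ?thesis using ga XLe[of p] Linv_B[of p] k by auto
    next
      assume gk: "g = e k"
      obtain b where b: "b \<in> B p" "e (Suc p) * L p * e (Suc p) = b * e (Suc p)"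
        using EXp[OF L_B[of p]] by blast
      have "b \<in> B k" using B_mono[OF b(1)] k by simp
      then show ?thesis using gk ga b(2) k by (auto simp: mult.assoc)
    qed
  next
    assume p1: "1 \<le> p" and ga: "\<gamma> = e p"
    have aj: "adj k p" unfolding adj_def k using p1 by auto
    show ?thesis using g
    proof
      assume "g = X k"
      then show ?thesis using ga rn3[OF a_Xee[OF aj]] B_Xi[OF p1, of k] k by auto
    next
      assume "g = e k"
      then show ?thesis using ga rn3[OF a_eee[OF aj]] B_one by force
    qed
  next
    assume p1: "1 \<le> p" and ga: "\<gamma> = X p"
    have aj: "adj k p" unfolding adj_def k using p1 by auto
    show ?thesis using g
    proof
      assume "g = X k"
      then show ?thesis using ga rn3[OF a_XXe[OF aj]] B_e[OF p1, of k] k by auto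
    next
      assume "g = e k"
      then show ?thesis using ga rn3[OF a_eXe[OF aj]] B_sc by auto
    qed
  next
    assume p1: "1 \<le> p" and ga: "\<gamma> = e p * L p"
    then obtain r where p: "p = Suc r" by (cases p) auto
    have Lr: "Linv r \<in> B k" using B_mono[OF Linv_B[of r]] k p by simp
    have Xp: "Xi p \<in> B k" using B_Xi[OF p1, of k] k by simp
    show ?thesis using g
    proof
      assume "g = X k"
      then have "g * (\<gamma> * e k) = (sc lam * Xi p * Linv r) * e k"
        using LIt_X_eL[OF p] ga k by (simp add: mult.assoc)
      moreover have "sc lam * Xi p * Linv r \<in> B k" using Lr Xp B_sc B_mult by blast
      ultimately show ?thesis by blast
    next
      assume "g = e k"
      then have "g * (\<gamma> * e k) = (sc lam * Linv r) * e k"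
        using LIt_e_eL[OF p] ga k by (simp add: mult.assoc)
      moreover have "sc lam * Linv r \<in> B k" using Lr B_sc B_mult by blast
      ultimately show ?thesis by blast
    qed
  qed
qed


lemma X_tab:
  assumes k: "k = Suc p" and g: "g = X k \<or> g = e k" and ga: "\<gamma> \<in> Gam p"
  shows "g * \<gamma> * X k \<in> Sp k"
proof -
  have k1: "1 \<le> k" using k by simp
  have gX: "X k \<in> Gam k" and ge: "e k \<in> Gam k" and geL: "e k * L k \<in> Gam k"
    using Gam_X Gam_e Gam_eL k1 by auto
  show ?thesis using ga
  proof (rule Gam_cases)
    assume "\<gamma> = 1"
    show ?thesis using g
    proof
      assume "g = X k"
      then have "g * \<gamma> * X k = 1 + d * X k - sc (delta q qi * lam) * e k"
        using XX[OF k1] \<open>\<gamma> = 1\<close> by simp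
      moreover have "1 + d * X k - sc (delta q qi * lam) * e k \<in> Sp k"
        by (intro Sp_diff Sp_add Sp_sc B_Sp B_one Sp_g gX ge)
      ultimately show ?thesis by simp
    next
      assume "g = e k"
      then have "g * \<gamma> * X k = sc lam * e k" using eX[OF k1] \<open>\<gamma> = 1\<close> by simp
      then show ?thesis using Sp_sc[OF Sp_g[OF ge]] by simp
    qed
  next
    assume ga: "\<gamma> = L p"
    show ?thesis using g
    proof
      assume "g = X k"
      then have "g * \<gamma> * X k = L k" using ga k by (simp add: L.simps)
      then show ?thesis using Sp_g[OF Gam_L] by simp
    next
      assume "g = e k"
      then have "g * \<gamma> * X k = (e k * Xi k) * L k" using ga k XiL[of p] by (simp add: mult.assoc)
      also have "\<dots> = sc lami * (e k * L k)" using eXi[OF k1] by (simp add: mult.assoc)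
      finally show ?thesis using Sp_sc[OF Sp_g[OF geL]] by simp
    qed
  next
    assume p1: "1 \<le> p" and ga: "\<gamma> = e p"
    have aj: "adj k p" unfolding adj_def k using p1 by auto
    have Xp: "Xi p \<in> B k" using B_Xi[OF p1, of k] k by simp
    show ?thesis using g
    proof
      assume "g = X k"
      then have "g * \<gamma> * X k = Xi p * e k * Xi p" using ga a_XeX[OF aj] by simp
      then show ?thesis using Sp.spg[OF Xp ge Xp] by simp
    next
      assume "g = e k"
      then have "g * \<gamma> * X k = e k * Xi p" using ga a_eeX[OF aj] by simp
      then show ?thesis using Sp_gw[OF ge Xp] by simp
    qed
  next
    assume p1: "1 \<le> p" and ga: "\<gamma> = X p"
    have aj: "adj k p" unfolding adj_def k using p1 by auto
    have Xp: "X p \<in> B k" using B_X[OF p1, of k] k by simp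
    have ep: "e p \<in> B k" using B_e[OF p1, of k] k by simp
    show ?thesis using g
    proof
      assume "g = X k"
      then have "g * \<gamma> * X k = X p * X k * X p" using ga a_braid[OF aj] by simp
      then show ?thesis using Sp.spg[OF Xp gX Xp] by simp
    next
      assume "g = e k"
      then have "g * \<gamma> * X k = e k * e p" using ga a_eXX[OF aj] by simp
      then show ?thesis using Sp_gw[OF ge ep] by simp
    qed
  next
    assume p1: "1 \<le> p" and ga: "\<gamma> = e p * L p"
    have aj: "adj k p" unfolding adj_def k using p1 by auto
    have Xp: "X p \<in> B k" using B_X[OF p1, of k] k by simp
    have Xip: "Xi p \<in> B k" using B_Xi[OF p1, of k] k by simp
    have XpL: "X p * L k = L k * X p" using L_comm[OF Xp] .
    show ?thesis using g
    proof
      assume "g = X k"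
      then have "g * \<gamma> * X k = (X k * e p * Xi k) * L k" using ga k XiL[of p] by (simp add: mult.assoc)
      also have "\<dots> = Xi p * e k * (X p * L k)" using a_XeXi[OF aj] by (simp add: mult.assoc)
      also have "\<dots> = Xi p * (e k * L k) * X p" using XpL by (simp add: mult.assoc)
      finally show ?thesis using Sp.spg[OF Xip geL Xp] by simp
    next
      assume "g = e k"
      then have "g * \<gamma> * X k = (e k * e p * Xi k) * L k" using ga k XiL[of p] by (simp add: mult.assoc)
      also have "\<dots> = e k * (X p * L k)" using a_eeXi[OF aj] by (simp add: mult.assoc)
      also have "\<dots> = (e k * L k) * X p" using XpL by (simp add: mult.assoc)
      finally show ?thesis using Sp_gw[OF geL Xp] by simp
    qed
  qed
qed

lemma T_tab:
  assumes k: "k = Suc p" and g: "g = X k \<or> g = e k" and ga': "\<gamma>' \<in> Gam p" and ga: "\<gamma> \<in> Gam k"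
    and LI: "\<exists>c\<in>B k. g * (\<gamma>' * e k) = c * e k"
  shows "g * \<gamma>' * \<gamma> \<in> Sp k"
proof -
  have k1: "1 \<le> k" using k by simp
  have gX: "X k \<in> Gam k" and ge: "e k \<in> Gam k" and geL: "e k * L k \<in> Gam k"
    using Gam_X Gam_e Gam_eL k1 by auto
  have gG: "g \<in> Gam k" using g gX ge by auto
  have g'B: "\<gamma>' \<in> B k" using Gam_B[OF ga'] k by simp
  obtain c where c: "c \<in> B k" "g * (\<gamma>' * e k) = c * e k" using LI by blast
  show ?thesis using ga
  proof (rule Gam_cases)
    assume "\<gamma> = 1"
    then show ?thesis using Sp_gw[OF gG g'B] by simp
  next
    assume ga: "\<gamma> = L k"
    have "g * \<gamma>' * \<gamma> = (g * L k) * \<gamma>'" using ga L_comm[OF g'B] by (simp add: mult.assoc)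
    moreover have "g * L k \<in> Sp k" using g XL_Sp[of p] eL_Sp[OF k1] k by auto
    ultimately show ?thesis using Sp_rmult g'B by simp
  next
    assume "\<gamma> = e k"
    then show ?thesis using c Sp_wg[OF c(1) ge] by (simp add: mult.assoc)
  next
    assume "\<gamma> = X k"
    then show ?thesis using X_tab[OF k g ga'] by simp
  next
    assume "\<gamma> = e k * L k"
    then have "g * \<gamma>' * \<gamma> = c * (e k * L k)" using c by (simp add: mult.assoc[symmetric])
    then show ?thesis using Sp_wg[OF c(1) geL] by simp
  qed
qed


lemma Term2:
  assumes k: "k = Suc p"
  shows "e (Suc k) * (e k * (L p * (X k * e (Suc k)))) = Linv p * e (Suc k)"
proof -
  define K where "K = Suc k"
  have aj: "adj K k" unfolding adj_def K_def k by auto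
  have r1: "X k * e K = Xi K * (e k * e K)" using rn3[OF a_Xiee[OF aj]] by simp
  have c1: "L p * (Xi K * z) = Xi K * (L p * z)" for z
    using cz[OF Xi_comm[OF L_B[of p]]] unfolding K_def k by simp
  have r2: "e K * (e k * (Xi K * z)) = e K * (X k * z)" for z
    using rz3[OF a_eeXi[OF aj]] by (simp add: mult.assoc)
  have r3: "X k * (L p * (e k * z)) = Linv p * (e k * z)" for z
    using rz2[OF XLe[of p]] unfolding k by (simp add: mult.assoc)
  have c2: "e K * (Linv p * z) = Linv p * (e K * z)" for z
    using cz[OF e_comm[OF Linv_B[of p]], symmetric] unfolding K_def k by simp
  have r4: "e K * (e k * e K) = e K" using rn3[OF a_eee[OF aj]] .
  have "e K * (e k * (L p * (X k * e K))) = e K * (e k * (L p * (Xi K * (e k * e K))))"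
    by (simp only: r1)
  also have "\<dots> = e K * (X k * (L p * (e k * e K)))" by (simp only: c1 r2)
  also have "\<dots> = Linv p * e K" by (simp only: r3 c2 r4)
  finally show ?thesis unfolding K_def .
qed

definition EXP :: "nat \<Rightarrow> bool" where
  "EXP k \<longleftrightarrow> (\<forall>a\<in>B (Suc k). \<exists>b\<in>B k. e (Suc k) * a * e (Suc k) = b * e (Suc k))"

lemma eLe:
  assumes k: "k = Suc p" and EXp: "EXP p"
  shows "\<exists>b\<in>B k. e (Suc k) * L k * e (Suc k) = b * e (Suc k)"
proof -
  define K where "K = Suc k"
  have k1: "1 \<le> k" using k by simp
  have aj: "adj K k" unfolding adj_def K_def k by auto
  obtain b where b: "b \<in> B p" "e k * L p * e k = b * e k"
    using EXp L_B[of p] unfolding EXP_def k by blast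
  have bk: "b \<in> B k" using B_mono[OF b(1)] k by simp
  have Lpk: "L p \<in> B k" using L_B[of p] k by simp
  have Lik: "Linv p \<in> B k" using Linv_B[of p] k by simp
  have r1: "e K * (X k * z) = e K * (e k * (Xi K * z))" for z
    using rz3[OF a_eeXi[OF aj]] by (simp add: mult.assoc)
  have r2: "X k * e K = Xi K * (e k * e K)" using rn3[OF a_Xiee[OF aj]] by simp
  have c1: "Xi K * (L p * z) = L p * (Xi K * z)" for z
    using cz[OF Xi_comm[OF L_B[of p]], symmetric] unfolding K_def k by simp
  have XiXk: "Xi K * (X k * e K) = e k * e K - d * (X k * e K) + d * (sc lami * e K)"
  proof -
    have "Xi K * (X k * e K) = X K * X k * e K - d * (X k * e K) + d * (e K * X k * e K)"
      unfolding Xi_def' by (simp add: algebra_simps)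
    then show ?thesis using a_XXe[OF aj] a_eXe[OF aj] by simp
  qed
  have t1: "e K * (e k * (L p * (e k * e K))) = b * e K"
  proof -
    have "e K * (e k * (L p * (e k * e K))) = e K * (b * (e k * e K))"
      using b(2) by (simp add: mult.assoc[symmetric])
    also have "\<dots> = b * (e K * (e k * e K))"
      using e_comm[OF bk] unfolding K_def by (simp add: mult.assoc[symmetric])
    also have "\<dots> = b * e K" using rn3[OF a_eee[OF aj]] by simp
    finally show ?thesis .
  qed
  have t2: "e K * (e k * (L p * (X k * e K))) = Linv p * e K"
    using Term2[OF k] unfolding K_def .
  have t3: "e K * (e k * (L p * e K)) = L p * e K"
  proof -
    have "e K * (e k * (L p * e K)) = (e K * e k * e K) * L p"
      using e_comm[OF Lpk] unfolding K_def by (simp add: mult.assoc)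
    also have "\<dots> = e K * L p" using a_eee[OF aj] by simp
    finally show ?thesis using e_comm[OF Lpk] unfolding K_def by simp
  qed
  have "e K * L k * e K = e K * (X k * (L p * (X k * e K)))"
    using k by (simp add: mult.assoc L.simps)
  also have "\<dots> = e K * (e k * (L p * (Xi K * (X k * e K))))"
    by (simp only: r1 c1 r2[symmetric])
  also have "\<dots> = e K * (e k * (L p * (e k * e K))) - d * (e K * (e k * (L p * (X k * e K))))
      + d * (sc lami * (e K * (e k * (L p * e K))))"
    unfolding XiXk by (simp only: distrib_left right_diff_distrib sc_z[of "L p"] sc_z[of "e k"] sc_z[of "e K"])
  also have "\<dots> = b * e K - d * (Linv p * e K) + d * (sc lami * (L p * e K))"
    unfolding t1 t2 t3 ..
  also have "\<dots> = (b - d * Linv p + d * sc lami * L p) * e K"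
    by (simp add: algebra_simps)
  finally have "e K * L k * e K = (b - d * Linv p + d * sc lami * L p) * e K" .
  moreover have "b - d * Linv p + d * sc lami * L p \<in> B k"
    using bk Lpk Lik by (intro B_add B_diff B_mult B_sc)
  ultimately show ?thesis unfolding K_def by blast
qed


definition SPAN :: "nat \<Rightarrow> bool" where
  "SPAN k \<longleftrightarrow> (\<forall>a\<in>B (Suc k). a \<in> Sp k)"

lemma gam_ex0: "\<gamma> \<in> Gam 0 \<Longrightarrow> \<exists>b\<in>B 0. e (Suc 0) * \<gamma> * e (Suc 0) = b * e (Suc 0)"
  unfolding Gam_def using ee[of 1] Yrels(4) B_sc by auto

lemma gam_ex:
  assumes k: "k = Suc p" and EXp: "EXP p" and ga: "\<gamma> \<in> Gam k"
  shows "\<exists>b\<in>B k. e (Suc k) * \<gamma> * e (Suc k) = b * e (Suc k)"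
proof -
  define K where "K = Suc k"
  have k1: "1 \<le> k" using k by simp
  have K1: "1 \<le> K" unfolding K_def by simp
  have aj: "adj K k" unfolding adj_def K_def k by auto
  show ?thesis using ga
  proof (rule Gam_cases)
    assume "\<gamma> = 1" then show ?thesis using ee[OF K1] B_sc unfolding K_def by auto
  next
    assume "\<gamma> = L k" then show ?thesis using eLe[OF k EXp] by simp
  next
    assume "\<gamma> = e k" then show ?thesis using a_eee[OF aj] B_one unfolding K_def by force
  next
    assume "\<gamma> = X k" then show ?thesis using a_eXe[OF aj] B_sc unfolding K_def by force
  next
    assume ga: "\<gamma> = e k * L k"
    have "e K * \<gamma> * e K = e K * (e k * X k) * (L p * (X k * e K))"
      using ga k by (simp add: mult.assoc L.simps)
    also have "\<dots> = sc lam * (e K * (e k * (L p * (X k * e K))))"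
      using eX[OF k1] by (simp add: mult.assoc sc_z[of "e K"])
    also have "\<dots> = (sc lam * Linv p) * e K" using Term2[OF k] unfolding K_def by (simp add: mult.assoc)
    finally show ?thesis using B_mult[OF B_sc Linv_B[of p]] k unfolding K_def by blast
  qed
qed

lemma ex_from_span:
  assumes sp: "SPAN k" and ga: "\<And>\<gamma>. \<gamma> \<in> Gam k \<Longrightarrow> \<exists>b\<in>B k. e (Suc k) * \<gamma> * e (Suc k) = b * e (Suc k)"
  shows "EXP k"
proof -
  have "\<exists>b\<in>B k. e (Suc k) * s * e (Suc k) = b * e (Suc k)" if "s \<in> Sp k" for s
    using that
  proof induction
    case (spg w g w')
    obtain b where b: "b \<in> B k" "e (Suc k) * g * e (Suc k) = b * e (Suc k)" using ga[OF spg(2)] by blast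
    have "e (Suc k) * (w * g * w') * e (Suc k) = w * (e (Suc k) * g * e (Suc k)) * w'"
      using e_comm[OF spg(1)] e_comm[OF spg(3)] by (simp add: mult.assoc) (simp add: mult.assoc[symmetric])
    also have "\<dots> = (w * b * w') * e (Suc k)"
      using b(2) e_comm[OF spg(3)] by (simp add: mult.assoc)
    finally show ?case using b(1) spg by (blast intro: B_mult)
  next
    case (spa a c)
    then obtain b1 b2 where "b1 \<in> B k" "e (Suc k) * a * e (Suc k) = b1 * e (Suc k)"
      "b2 \<in> B k" "e (Suc k) * c * e (Suc k) = b2 * e (Suc k)" by blast
    then show ?case by (intro bexI[of _ "b1 + b2"]) (auto simp: algebra_simps intro: B_add)
  qed
  then show ?thesis using sp unfolding EXP_def SPAN_def by blast
qed

lemma B0_comm: "c \<in> B 0 \<Longrightarrow> c * z = z * c"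
  by (rule B_comm) (auto simp: sc_comm)

lemma span0: "SPAN 0"
proof -
  have Ys: "Y * s \<in> Sp 0" if "s \<in> Sp 0" for s
    using that
  proof induction
    case (spg w g w')
    have gg: "g = 1 \<or> g = Y" using spg(2) unfolding Gam_def by simp
    have "Y * g \<in> Sp 0" using gg
    proof
      assume "g = 1" then show ?thesis using Sp_g[OF Gam_L[of 0]] by simp
    next
      assume "g = Y"
      then have "Y * g = sc q1 * Y + sc qi" using Yrels(2) by simp
      then show ?thesis using Sp_add[OF Sp_sc[OF Sp_g[OF Gam_L[of 0]]] B_Sp[OF B_sc]] by simp
    qed
    moreover have "Y * (w * g * w') = w * (Y * g) * w'"
      using B0_comm[OF spg(1), of Y] by (simp add: mult.assoc[symmetric])
    moreover have "w * (Y * g) * w' \<in> Sp 0"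
      using Sp_rmult[OF Sp_lmult[OF calculation(1) spg(1)] spg(3)] .
    ultimately show ?case by simp
  next
    case (spa a b) then show ?case by (simp add: distrib_left Sp_add)
  qed
  have "\<forall>s\<in>Sp 0. a * s \<in> Sp 0" if "a \<in> B (Suc 0)" for a
    using that
  proof induction
    case (scal r) then show ?case using Sp_sc by blast
  next
    case genY then show ?case using Ys by blast
  next
    case (add a b) then show ?case by (simp add: distrib_right Sp_add)
  next
    case (mult a b) then show ?case by (simp add: mult.assoc)
  qed auto
  then show ?thesis unfolding SPAN_def using Sp_g[OF Gam_1] by force
qed

lemma span_step:
  assumes k: "k = Suc p" and SPp: "SPAN p" and EXp: "EXP p"
  shows "SPAN k"
proof -
  have k1: "1 \<le> k" using k by simp
  have gl: "g * s \<in> Sp k" if g: "g = X k \<or> g = e k" and s: "s \<in> Sp k" for g s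
    using s
  proof induction
    case (spg w \<gamma> w')
    have wp: "w \<in> Sp p" using SPp spg(1) k unfolding SPAN_def by blast
    have "g * w * \<gamma> \<in> Sp k" using wp
    proof induction
      case (spg u \<gamma>' u')
      have ug: "u * g = g * u" using g X_comm[OF spg(1)] e_comm[OF spg(1)] k by auto
      have ug2: "u' * \<gamma> = \<gamma> * u'" using Gam_comm[of \<gamma> p u'] \<open>\<gamma> \<in> Gam k\<close> spg(3) k by simp
      have "g * (u * \<gamma>' * u') * \<gamma> = u * (g * \<gamma>' * \<gamma>) * u'"
        using ug ug2 by (simp add: mult.assoc) (simp add: mult.assoc[symmetric])
      moreover have "g * \<gamma>' * \<gamma> \<in> Sp k"
        using T_tab[OF k g spg(2) \<open>\<gamma> \<in> Gam k\<close> LI_tab[OF k g spg(2)]] EXp unfolding EXP_def by blast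
      moreover have "u \<in> B k" "u' \<in> B k" using B_mono spg(1,3) k by auto
      ultimately show ?case using Sp_lmult Sp_rmult by simp
    next
      case (spa a b) then show ?case by (simp add: distrib_left distrib_right Sp_add)
    qed
    then have "g * w * \<gamma> * w' \<in> Sp k" using Sp_rmult spg(3) by blast
    then show ?case by (simp add: mult.assoc)
  next
    case (spa a b) then show ?case by (simp add: distrib_left Sp_add)
  qed
  have "\<forall>s\<in>Sp k. a * s \<in> Sp k" if "a \<in> B (Suc k)" for a
    using that
  proof induction
    case (scal r) then show ?case using Sp_sc by blast
  next
    case genY then show ?case using Sp_lmult B_Y[OF k1] by blast
  next
    case (genX i)
    show ?case
    proof (cases "i < k")
      case True then show ?thesis using Sp_lmult B_X[OF genX(1) True] by blast
    next
      case False then have "i = k" using genX by simp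
      then show ?thesis using gl by blast
    qed
  next
    case (gene i)
    show ?case
    proof (cases "i < k")
      case True then show ?thesis using Sp_lmult B_e[OF gene(1) True] by blast
    next
      case False then have "i = k" using gene by simp
      then show ?thesis using gl by blast
    qed
  next
    case (add a b) then show ?case by (simp add: distrib_right Sp_add)
  next
    case (mult a b) then show ?case by (simp add: mult.assoc)
  qed
  then show ?thesis unfolding SPAN_def using Sp_g[OF Gam_1] by force
qed

lemma SPAN_EXP: "SPAN k \<and> EXP k"
proof (induction k)
  case 0
  then show ?case using span0 ex_from_span[OF span0 gam_ex0] by simp
next
  case (Suc p)
  have sp: "SPAN (Suc p)" using span_step[of "Suc p" p] Suc by simp
  moreover have "EXP (Suc p)" using ex_from_span[OF sp gam_ex[of "Suc p" p]] Suc by simp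
  ultimately show ?case by simp
qed

lemma EXall: "a \<in> B (Suc k) \<Longrightarrow> \<exists>b\<in>B k. e (Suc k) * a * e (Suc k) = b * e (Suc k)"
  using SPAN_EXP[of k] unfolding EXP_def by blast


abbreviation "ep \<equiv> eps sc x Y X e"
abbreviation "tr \<equiv> trn sc x Y X e"

lemma eps_char:
  assumes b: "b \<in> B n" and eq: "e (Suc n) * a * e (Suc n) = sc x * b * e (Suc n)"
  shows "ep n a = b"
  unfolding eps_def
proof (rule the_equality)
  show "b \<in> B n \<and> e (n + 1) * a * e (n + 1) = sc x * b * e (n + 1)" using b eq by simp
next
  fix b' assume h: "b' \<in> B n \<and> e (n + 1) * a * e (n + 1) = sc x * b' * e (n + 1)"
  then have "sc x * b' * e (Suc n) = sc x * b * e (Suc n)" using eq by simp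
  then have "sc xi * (sc x * b' * e (Suc n)) = sc xi * (sc x * b * e (Suc n))" by simp
  then have "(sc xi * sc x) * b' * e (Suc n) = (sc xi * sc x) * b * e (Suc n)" by (simp add: mult.assoc)
  then have "b' * e (Suc n) = b * e (Suc n)" using xxi_sc by simp
  then have "sc xi * b' * e (n + 1) = sc xi * b * e (n + 1)" by (simp add: mult.assoc)
  then show "b' = b" using inj h b by blast
qed

lemma eps_ex:
  assumes a: "a \<in> B (Suc n)"
  shows "\<exists>b\<in>B n. e (Suc n) * a * e (Suc n) = sc x * b * e (Suc n)"
proof -
  obtain b0 where b0: "b0 \<in> B n" "e (Suc n) * a * e (Suc n) = b0 * e (Suc n)" using EXall[OF a] by blast
  have "sc x * (sc xi * b0) * e (Suc n) = (sc x * sc xi) * b0 * e (Suc n)" by (simp add: mult.assoc)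
  also have "\<dots> = b0 * e (Suc n)" using xxi_sc by simp
  finally show ?thesis using b0 B_mult[OF B_sc b0(1)] by metis
qed

lemma sc_swap: "sc r * sc s = sc s * sc r"
  by (simp add: sc_mult[symmetric] mult.commute)

lemma eps_sc: "ep n (sc r) = sc r"
proof (rule eps_char[OF B_sc])
  have "e (Suc n) * sc r * e (Suc n) = sc r * (e (Suc n) * e (Suc n))"
    by (subst sc_comm[of r "e (Suc n)", symmetric]) (simp add: mult.assoc)
  also have "\<dots> = sc r * sc x * e (Suc n)" using ee[of "Suc n"] by (simp add: mult.assoc)
  also have "\<dots> = sc x * sc r * e (Suc n)" using sc_swap[of r x] by simp
  finally show "e (Suc n) * sc r * e (Suc n) = sc x * sc r * e (Suc n)" .
qed

lemma trn_sc: "tr m (sc r) = sc r"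
  by (induction m) (simp_all add: eps_sc)

lemma trn_lin: "c \<in> B n \<Longrightarrow> tr n (sc t * c) = sc t * tr n c"
proof (induction n arbitrary: c)
  case 0 then show ?case by simp
next
  case (Suc m)
  obtain b where b: "b \<in> B m" "e (Suc m) * c * e (Suc m) = sc x * b * e (Suc m)"
    using eps_ex[OF Suc.prems] by blast
  have e1: "ep m c = b" by (rule eps_char[OF b])
  have "e (Suc m) * (sc t * c) * e (Suc m) = sc t * (e (Suc m) * c * e (Suc m))"
    using sc_comm[of t "e (Suc m)"] by (simp add: mult.assoc[symmetric])
  also have "\<dots> = (sc t * sc x) * b * e (Suc m)" using b(2) by (simp add: mult.assoc)
  also have "\<dots> = sc x * (sc t * b) * e (Suc m)" using sc_swap[of t x] by (simp add: mult.assoc)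
  finally have e2: "ep m (sc t * c) = sc t * b" using eps_char B_mult[OF B_sc b(1)] by blast
  show ?case using Suc.IH[OF b(1)] e1 e2 by simp
qed

lemma main_gen:
  assumes w1: "w1 \<in> B n" and w2: "w2 \<in> B n"
    and g: "e (Suc n) * \<gamma> * e (Suc n) = sc x * sc \<tau> * e (Suc n)"
  shows "ep n (w1 * \<gamma> * w2) = tr (Suc n) \<gamma> * (w1 * w2)
     \<and> tr (Suc n) (w1 * \<gamma> * w2) = tr (Suc n) \<gamma> * tr n (w1 * w2)"
proof -
  have tg: "tr (Suc n) \<gamma> = sc \<tau>"
    using eps_char[OF B_sc g] trn_sc by simp
  have "e (Suc n) * (w1 * \<gamma> * w2) * e (Suc n) = w1 * (e (Suc n) * \<gamma> * e (Suc n)) * w2"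
    using e_comm[OF w1] e_comm[OF w2] by (simp add: mult.assoc) (simp add: mult.assoc[symmetric])
  also have "\<dots> = w1 * (sc x * sc \<tau>) * e (Suc n) * w2" using g by (simp add: mult.assoc)
  also have "\<dots> = (sc x * sc \<tau>) * w1 * (w2 * e (Suc n))"
    using sc_comm[of "x * \<tau>" w1] e_comm[OF w2] by (simp add: sc_mult[symmetric] mult.assoc)
  also have "\<dots> = sc x * (sc \<tau> * (w1 * w2)) * e (Suc n)" by (simp add: mult.assoc)
  finally have "ep n (w1 * \<gamma> * w2) = sc \<tau> * (w1 * w2)"
    using eps_char B_mult[OF B_sc B_mult[OF w1 w2]] by blast
  then show ?thesis using tg trn_lin[OF B_mult[OF w1 w2]] by simp
qed

lemma gamma_vals:
  assumes n: "1 \<le> n" and g: "\<gamma> \<in> {1, e n, X n, Yk n}"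
  shows "\<exists>\<tau>. e (Suc n) * \<gamma> * e (Suc n) = sc x * sc \<tau> * e (Suc n)"
proof -
  have aj: "adj (Suc n) n" unfolding adj_def using n by auto
  have xx: "sc x * sc xi = 1" using xxi_sc by simp
  have c1: "e (Suc n) * 1 * e (Suc n) = sc x * sc 1 * e (Suc n)" using ee[of "Suc n"] sc1 by simp
  have c2: "e (Suc n) * e n * e (Suc n) = sc x * sc xi * e (Suc n)" using a_eee[OF aj] xx by simp
  have c3: "e (Suc n) * X n * e (Suc n) = sc x * sc (xi * lami) * e (Suc n)"
    using a_eXe[OF aj] xx by (simp add: sc_mult mult.assoc[symmetric])
  have "sc x * sc (A * xi) = sc A"
    using xx by (simp add: sc_mult sc_swap[of A xi] mult.assoc[symmetric])
  then have c4: "e (Suc n) * Yk n * e (Suc n) = sc x * sc (A * xi) * e (Suc n)"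
    using eYe[of n] by (simp add: mult.assoc)
  show ?thesis using g c1 c2 c3 c4 by blast
qed

end

theorem lemma12:
  fixes sc :: "'r::idom \<Rightarrow> 'a::ring_1"
    and q qi lam lami x xi A q1 :: 'r
    and Y :: 'a and X e :: "nat \<Rightarrow> 'a"
    and n :: nat and w1 w2 \<gamma> :: 'a
  assumes "BB_axioms sc q qi lam lami x xi A q1 Y X e"
    and "1 \<le> n"
    and "w1 \<in> BBset sc Y X e n" and "w2 \<in> BBset sc Y X e n"
    and "\<gamma> \<in> {1, e n, X n, Yn sc q qi Y X e n}"
  shows "eps sc x Y X e n (w1 * \<gamma> * w2) = trn sc x Y X e (Suc n) \<gamma> * (w1 * w2)
     \<and> trn sc x Y X e (Suc n) (w1 * \<gamma> * w2)
         = trn sc x Y X e (Suc n) \<gamma> * trn sc x Y X e n (w1 * w2)"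
proof -
  interpret BBloc sc q qi lam lami x xi A q1 Y X e by (rule BBloc.intro) (rule assms(1))
  obtain \<tau> where "e (Suc n) * \<gamma> * e (Suc n) = sc x * sc \<tau> * e (Suc n)"
    using gamma_vals[OF assms(2,5)] by blast
  then show ?thesis using main_gen[OF assms(3,4)] by blast
qed

end
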